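(* In the setting described in the context, assume that $H$ has no separating $2$-cycles. Let $C$ be a $3$-cycle of $H$ with black vertices $x_1,x_2,x_3$, and let $e$ be the edge of $C$ joining $x_1$ and $x_3$. Suppose $e$ is a partnered edge of $H$ and let $e'$ be an edge of $H$ parallel to $e$. Let $P=x_1wx_3$ and $P'=x_1w'x_3$ be the $2$-paths of $F$ corresponding to $e$ and $e'$ respectively. Then one of $P,P'$ lies in $\mathrm{int}(C)$ and the other lies in $\mathrm{ext}(C)$ (meaning its red internal vertex and its two edges lie there).
   Context: Drawings: vertices are distinct points, edges are arcs; no edge crosses itself, no two edges cross more than once, no two edges with a common end cross; a drawing is $1$-planar if every edge is crossed at most once. Setting: $G$ is a simple bipartite $1$-planar graph with partite sets $X,Y$, $3\le|X|\le|Y|$, and $D$ is a $1$-planar drawing of $G$ with the minimum number of crossings among all $1$-planar drawings of $G$. $D^\times$ is the plane graph obtained from $D$ by turning every crossing into a new vertex of degree $4$ (a crossing vertex); $W$ is the set of crossing vertices. Vertices of $X$ are called black, of $Y$ white, of $W$ red. Each $w\in W$ is adjacent in $D^\times$ to exactly two black vertices $x_1,x_2$. For each $w\in W$ add a new edge $e_w$ joining $x_1,x_2$, drawn arbitrarily close to one side of the path $x_1wx_2$ so that it crosses no edge and the region between $e_w$ and $x_1wx_2$ contains no vertex or edge of $D^\times$; the resulting plane (possibly multi-)graph is $D^\times_W$. Let $F=D^\times_W[X\cup W]$ and $H=D^\times_W[X]$, so $E(H)=\{e_w:w\in W\}$; the path $x_1wx_2$ is the $2$-path of $F$ corresponding to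 $e_w$. For a cycle $C$ in the plane, $\mathrm{int}(C)$ and $\mathrm{ext}(C)$ denote the bounded and unbounded open regions of its complement. A $2$-cycle of $H$ consists of two parallel edges; it is separating if both $\mathrm{int}(C)$ and $\mathrm{ext}(C)$ contain at least one (black) vertex of $H$. An edge of $H$ is simple if no other edge of $H$ is parallel to it, and partnered otherwise. *)

theory Defs
  imports "HOL-Analysis.Analysis"
begin

text \<open>Graphs: a simple bipartite graph with partite sets X, Y is given by an edge set
  E \<subseteq> X \<times> Y (edge (x,y) joins the black vertex x and the white vertex y).\<close>

definition edge_int :: "(real \<Rightarrow> complex) \<Rightarrow> complex set" where
  "edge_int g = path_image g - {pathstart g, pathfinish g}"

definition at_most_one :: "'a set \<Rightarrow> bool" where
  "at_most_one S \<longleftrightarrow> (\<forall>a\<in>S. \<forall>b\<in>S. a = b)"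

definition drawing ::
  "'v set \<Rightarrow> 'v set \<Rightarrow> ('v \<times> 'v) set \<Rightarrow> ('v \<Rightarrow> complex) \<Rightarrow> ('v \<times> 'v \<Rightarrow> real \<Rightarrow> complex) \<Rightarrow> bool" where
  "drawing X Y E pos \<gamma> \<longleftrightarrow>
     inj_on pos (X \<union> Y) \<and>
     (\<forall>e\<in>E. arc (\<gamma> e) \<and> pathstart (\<gamma> e) = pos (fst e) \<and> pathfinish (\<gamma> e) = pos (snd e)) \<and>
     (\<forall>e\<in>E. \<forall>v\<in>X \<union> Y. pos v \<in> path_image (\<gamma> e) \<longrightarrow> v = fst e \<or> v = snd e) \<and>
     (\<forall>e\<in>E. \<forall>f\<in>E. e \<noteq> f \<longrightarrow> at_most_one (edge_int (\<gamma> e) \<inter> edge_int (\<gamma> f))) \<and>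
     (\<forall>e\<in>E. \<forall>f\<in>E. e \<noteq> f \<and> {fst e, snd e} \<inter> {fst f, snd f} \<noteq> {} \<longrightarrow>
         edge_int (\<gamma> e) \<inter> edge_int (\<gamma> f) = {})"

definition crossings_on ::
  "('v \<times> 'v) set \<Rightarrow> ('v \<times> 'v \<Rightarrow> real \<Rightarrow> complex) \<Rightarrow> 'v \<times> 'v \<Rightarrow> (('v \<times> 'v) \<times> complex) set" where
  "crossings_on E \<gamma> e = {(f, p). f \<in> E \<and> f \<noteq> e \<and> p \<in> edge_int (\<gamma> e) \<inter> edge_int (\<gamma> f)}"

definition one_planar_drawing ::
  "'v set \<Rightarrow> 'v set \<Rightarrow> ('v \<times> 'v) set \<Rightarrow> ('v \<Rightarrow> complex) \<Rightarrow> ('v \<times> 'v \<Rightarrow> real \<Rightarrow> complex) \<Rightarrow> bool" where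
  "one_planar_drawing X Y E pos \<gamma> \<longleftrightarrow>
     drawing X Y E pos \<gamma> \<and> (\<forall>e\<in>E. at_most_one (crossings_on E \<gamma> e))"

text \<open>The set W of crossing points (red vertices).  In a 1-planar drawing every
  crossing point lies on exactly two edges, so card W is the number of crossings.\<close>
definition crossing_points ::
  "('v \<times> 'v) set \<Rightarrow> ('v \<times> 'v \<Rightarrow> real \<Rightarrow> complex) \<Rightarrow> complex set" where
  "crossing_points E \<gamma> = {p. \<exists>e\<in>E. \<exists>f\<in>E. e \<noteq> f \<and> p \<in> edge_int (\<gamma> e) \<inter> edge_int (\<gamma> f)}"

definition min_crossing_one_planar_drawing ::
  "'v set \<Rightarrow> 'v set \<Rightarrow> ('v \<times> 'v) set \<Rightarrow> ('v \<Rightarrow> complex) \<Rightarrow> ('v \<times> 'v \<Rightarrow> real \<Rightarrow> complex) \<Rightarrow> bool" where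
  "min_crossing_one_planar_drawing X Y E pos \<gamma> \<longleftrightarrow>
     one_planar_drawing X Y E pos \<gamma> \<and>
     (\<forall>pos' \<gamma>'. one_planar_drawing X Y E pos' \<gamma>' \<longrightarrow>
         card (crossing_points E \<gamma>) \<le> card (crossing_points E \<gamma>'))"

definition blacks :: "('v \<times> 'v) set \<Rightarrow> ('v \<times> 'v \<Rightarrow> real \<Rightarrow> complex) \<Rightarrow> complex \<Rightarrow> 'v set" where
  "blacks E \<gamma> w = {fst e | e. e \<in> E \<and> w \<in> edge_int (\<gamma> e)}"

definition seg_to :: "(real \<Rightarrow> complex) \<Rightarrow> complex \<Rightarrow> complex set" where
  "seg_to g p = g ` {0 .. (SOME t. 0 \<le> t \<and> t \<le> 1 \<and> g t = p)}"

text \<open>Point set of the 2-path x1 w x2 of F (edges of D-times from the black ends to w).\<close>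
definition two_path :: "('v \<times> 'v) set \<Rightarrow> ('v \<times> 'v \<Rightarrow> real \<Rightarrow> complex) \<Rightarrow> complex \<Rightarrow> complex set" where
  "two_path E \<gamma> w = \<Union>{seg_to (\<gamma> e) w | e. e \<in> E \<and> w \<in> edge_int (\<gamma> e)}"

definition drawing_points ::
  "'v set \<Rightarrow> 'v set \<Rightarrow> ('v \<times> 'v) set \<Rightarrow> ('v \<Rightarrow> complex) \<Rightarrow> ('v \<times> 'v \<Rightarrow> real \<Rightarrow> complex) \<Rightarrow> complex set" where
  "drawing_points X Y E pos \<gamma> = pos ` (X \<union> Y) \<union> \<Union>((\<lambda>e. path_image (\<gamma> e)) ` E)"

text \<open>Admissible choice of the new edges e_w (given as arcs \<eta> w), w \<in> W:
  e_w joins the two black neighbours of w, crosses nothing, the e_w are pairwise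
  non-crossing, and the region between e_w and x1 w x2 (the bounded face of the
  closed curve they form) contains no point of D-times nor of any other e_w'.\<close>
definition aux_edges ::
  "'v set \<Rightarrow> 'v set \<Rightarrow> ('v \<times> 'v) set \<Rightarrow> ('v \<Rightarrow> complex) \<Rightarrow> ('v \<times> 'v \<Rightarrow> real \<Rightarrow> complex)
     \<Rightarrow> (complex \<Rightarrow> real \<Rightarrow> complex) \<Rightarrow> bool" where
  "aux_edges X Y E pos \<gamma> \<eta> \<longleftrightarrow>
    (\<forall>w\<in>crossing_points E \<gamma>.
       arc (\<eta> w) \<and>
       {pathstart (\<eta> w), pathfinish (\<eta> w)} = pos ` blacks E \<gamma> w \<and>
       edge_int (\<eta> w) \<inter> drawing_points X Y E pos \<gamma> = {} \<and>
       inside (path_image (\<eta> w) \<union> two_path E \<gamma> w) \<inter> drawing_points X Y E pos \<gamma> = {} \<and>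
       (\<forall>w'\<in>crossing_points E \<gamma>. w' \<noteq> w \<longrightarrow>
          edge_int (\<eta> w) \<inter> edge_int (\<eta> w') = {} \<and>
          inside (path_image (\<eta> w) \<union> two_path E \<gamma> w) \<inter> path_image (\<eta> w') = {}))"

definition no_separating_2cycle ::
  "'v set \<Rightarrow> ('v \<times> 'v) set \<Rightarrow> ('v \<Rightarrow> complex) \<Rightarrow> ('v \<times> 'v \<Rightarrow> real \<Rightarrow> complex)
     \<Rightarrow> (complex \<Rightarrow> real \<Rightarrow> complex) \<Rightarrow> bool" where
  "no_separating_2cycle X E pos \<gamma> \<eta> \<longleftrightarrow>
    (\<forall>w\<in>crossing_points E \<gamma>. \<forall>w'\<in>crossing_points E \<gamma>.
       w \<noteq> w' \<and> blacks E \<gamma> w = blacks E \<gamma> w' \<longrightarrow>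
       \<not> ((\<exists>x\<in>X. pos x \<in> inside (path_image (\<eta> w) \<union> path_image (\<eta> w'))) \<and>
          (\<exists>x\<in>X. pos x \<in> outside (path_image (\<eta> w) \<union> path_image (\<eta> w')))))"

end

theory Submission
  imports Defs
begin


lemma conn_split: fixes S :: "'a::topological_space set"
  assumes "connected S" "S \<subseteq> A \<union> B" "open A" "open B" "A \<inter> B = {}"
  shows "S \<subseteq> A \<or> S \<subseteq> B"
proof (rule ccontr)
  assume "\<not> (S \<subseteq> A \<or> S \<subseteq> B)"
  then show False using assms unfolding connected_def by blast
qed

lemma side_lemma: fixes S :: "complex set"
  assumes "open U" "connected S" "S \<inter> frontier U = {}" "T \<subseteq> closure S"
    "x \<in> T" "x \<in> U" "y \<in> T" "y \<notin> closure U"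
  shows False
proof -
  have "S \<inter> U \<noteq> {}"
    using open_Int_closure_eq_empty[OF assms(1), of S] assms(4,5,6) by blast
  moreover have "S - U \<noteq> {}"
  proof
    assume "S - U = {}"
    then have "S \<subseteq> U" by blast
    then have "closure S \<subseteq> closure U" by (rule closure_mono)
    then show False using assms(4,7,8) by blast
  qed
  ultimately show False using connected_Int_frontier[OF assms(2)] assms(3) by blast
qed

lemma jordan2:
  fixes g1 g2 :: "real \<Rightarrow> complex"
  assumes "arc g1" "arc g2" "pathstart g2 = pathstart g1" "pathfinish g2 = pathfinish g1"
    "path_image g1 \<inter> path_image g2 \<subseteq> {pathstart g1, pathfinish g1}"
  defines "J \<equiv> path_image g1 \<union> path_image g2"
  shows "open(inside J) \<and> connected(inside J) \<and> inside J \<noteq> {} \<and>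
         open(outside J) \<and> connected(outside J) \<and> outside J \<noteq> {} \<and> bounded (inside J) \<and>
         frontier(inside J) = J \<and> frontier (outside J) = J \<and>
         inside J \<inter> outside J = {} \<and> inside J \<union> outside J = - J \<and> closed J \<and> bounded J"
proof -
  let ?l = "g1 +++ reversepath g2"
  have sp: "simple_path ?l"
    using assms by (simp add: simple_path_join_loop_eq arc_reversepath)
  have cl: "pathfinish ?l = pathstart ?l" using assms by simp
  have pi: "path_image ?l = J" using assms
    by (simp add: path_image_join J_def)
  have "closed J" "bounded J" using sp pi
    by (metis closed_simple_path_image, metis bounded_simple_path_image)
  then show ?thesis using Jordan_inside_outside[OF sp cl] pi by simp
qed

definition jc :: "complex set \<Rightarrow> bool" where
  "jc J \<longleftrightarrow> open(inside J) \<and> connected(inside J) \<and> inside J \<noteq> {} \<and>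
         open(outside J) \<and> connected(outside J) \<and> outside J \<noteq> {} \<and> bounded (inside J) \<and>
         frontier(inside J) = J \<and> frontier (outside J) = J \<and>
         inside J \<inter> outside J = {} \<and> inside J \<union> outside J = - J \<and> closed J \<and> bounded J"

lemma jc_arcs:
  fixes g1 g2 :: "real \<Rightarrow> complex"
  assumes "arc g1" "arc g2" "pathstart g2 = pathstart g1" "pathfinish g2 = pathfinish g1"
    "path_image g1 \<inter> path_image g2 \<subseteq> {pathstart g1, pathfinish g1}"
  shows "jc (path_image g1 \<union> path_image g2)"
  using jordan2[OF assms] unfolding jc_def by blast

lemma jc_part: "jc J \<Longrightarrow> inside J \<union> outside J = - J" unfolding jc_def by blast
lemma jc_disj: "jc J \<Longrightarrow> inside J \<inter> outside J = {}" unfolding jc_def by blast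
lemma jc_ne: "jc J \<Longrightarrow> inside J \<noteq> {}" "jc J \<Longrightarrow> outside J \<noteq> {}" unfolding jc_def by blast+

lemma jc_closure: "jc J \<Longrightarrow> closure (inside J) = inside J \<union> J"
  unfolding jc_def by (metis closure_Un_frontier)

lemma jc_closure_out: "jc J \<Longrightarrow> closure (outside J) = outside J \<union> J"
  unfolding jc_def by (metis closure_Un_frontier)

lemma jc_compl_closure: "jc J \<Longrightarrow> - closure (inside J) = outside J"
  using jc_closure[of J] unfolding jc_def by blast

lemma disj_ins:
  assumes "jc (G \<union> H)" "jc (G \<union> K)" "K \<inter> inside (G \<union> H) = {}" "H \<inter> inside (G \<union> K) = {}"
    "p \<in> H" "p \<notin> G \<union> K"
  shows "inside (G \<union> H) \<inter> inside (G \<union> K) = {}"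
proof -
  let ?U3 = "inside (G \<union> H)" and ?U2 = "inside (G \<union> K)"
  have a: "?U3 \<subseteq> ?U2 \<or> ?U3 \<subseteq> outside (G \<union> K)"
    apply (rule conn_split)
    using assms(1,2,3) unfolding jc_def
    apply (auto)
    by (metis ComplI Compl_Un IntI Un_iff empty_iff inside_no_overlap)
  have b: "?U2 \<subseteq> ?U3 \<or> ?U2 \<subseteq> outside (G \<union> H)"
    apply (rule conn_split)
    using assms(1,2,4) unfolding jc_def
    apply (auto)
    by (metis ComplI Compl_Un IntI Un_iff empty_iff inside_no_overlap)
  show ?thesis
  proof (cases "?U3 \<subseteq> ?U2 \<and> ?U2 \<subseteq> ?U3")
    case True
    then have "?U3 = ?U2" by blast
    then have "frontier ?U3 = frontier ?U2" by simp
    then have "G \<union> H = G \<union> K" using assms(1,2) unfolding jc_def by simp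
    then show ?thesis using assms(5,6) by blast
  next
    case False
    then show ?thesis using a b jc_disj[OF assms(1)] jc_disj[OF assms(2)] by blast
  qed
qed

lemma theta_middle_sets:
  assumes j12: "jc (T1 \<union> T2)" and j1c: "jc (T1 \<union> T)" and j2c: "jc (T2 \<union> T)"
    and i12: "T1 \<inter> T2 \<subseteq> T"
    and p1: "p1 \<in> T1" "p1 \<notin> T2 \<union> T"
    and p2: "p2 \<in> T2" "p2 \<notin> T1 \<union> T"
    and p: "p \<in> T" "p \<notin> T1 \<union> T2"
    and cT: "connected T"
    and n1: "T \<inter> inside (T1 \<union> T2) = {}"
    and n2: "T1 \<inter> inside (T2 \<union> T) = {}"
    and n3: "T2 \<inter> inside (T1 \<union> T) = {}"
  shows False
proof -
  define U3 where "U3 = inside (T1 \<union> T2)"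
  define U2 where "U2 = inside (T1 \<union> T)"
  define U1 where "U1 = inside (T2 \<union> T)"
  have d32: "U3 \<inter> U2 = {}" unfolding U3_def U2_def
    by (rule disj_ins[OF j12 j1c]) (use n1 n3 p2 in auto)
  have d31: "U3 \<inter> U1 = {}" unfolding U3_def U1_def
    using disj_ins[of T2 T1 T p1] j12 j1c j2c n1 n2 p1 by (auto simp: Un_commute)
  have d12: "U1 \<inter> U2 = {}" unfolding U1_def U2_def
    using disj_ins[of T T2 T1 p2] j12 j1c j2c n2 n3 p2 by (auto simp: Un_commute)
  have cl1: "closure U1 = U1 \<union> T2 \<union> T" unfolding U1_def using jc_closure[OF j2c] by auto
  have cl2: "closure U2 = U2 \<union> T1 \<union> T" unfolding U2_def using jc_closure[OF j1c] by auto
  have cl3: "closure U3 = U3 \<union> T1 \<union> T2" unfolding U3_def using jc_closure[OF j12] by auto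
  have o1: "U1 \<inter> (T2 \<union> T) = {}" "U2 \<inter> (T1 \<union> T) = {}" "U3 \<inter> (T1 \<union> T2) = {}"
    unfolding U1_def U2_def U3_def by auto
  have int: "closure U1 \<inter> closure U2 = T"
    unfolding cl1 cl2 using d12 o1 n2 n3 i12 unfolding U1_def U2_def by blast
  have conn: "connected (- (closure U1 \<union> closure U2))"
  proof (rule Janiszewski_connected)
    show "compact (closure U1)" using j2c unfolding U1_def jc_def
      by (simp add: compact_closure)
    show "closed (closure U2)" by simp
    show "connected (closure U1 \<inter> closure U2)" using int cT by simp
    show "connected (- closure U1)" using jc_compl_closure[OF j2c] j2c unfolding U1_def jc_def by simp
    show "connected (- closure U2)" using jc_compl_closure[OF j1c] j1c unfolding U2_def jc_def by simp
  qed
  have bd: "bounded (closure U1 \<union> closure U2 \<union> closure U3)"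
    using j12 j1c j2c unfolding U1_def U2_def U3_def jc_def by (simp add: bounded_closure)
  obtain z where z: "z \<notin> closure U1 \<union> closure U2 \<union> closure U3"
  proof -
    have "\<not> (UNIV \<subseteq> closure U1 \<union> closure U2 \<union> closure U3)"
      using bd bounded_subset not_bounded_UNIV[where 'a=complex] by blast
    then show ?thesis using that by blast
  qed
  let ?S = "- (closure U1 \<union> closure U2)"
  have "?S \<subseteq> U3 \<or> ?S \<subseteq> outside (T1 \<union> T2)"
    apply (rule conn_split[OF conn])
    using j12 unfolding jc_def U3_def[symmetric] cl1 cl2 by auto
  moreover have "z \<in> ?S" using z by blast
  moreover have "z \<in> outside (T1 \<union> T2)"
  proof -
    have "z \<notin> U3 \<union> T1 \<union> T2" using z cl3 by blast
    then show ?thesis using jc_part[OF j12] unfolding U3_def by blast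
  qed
  moreover have "U3 \<subseteq> ?S" using d31 d32 o1(3) n1 unfolding cl1 cl2 U3_def[symmetric] by auto
  moreover have "U3 \<noteq> {}" "U3 \<inter> outside (T1 \<union> T2) = {}"
    using jc_ne[OF j12] jc_disj[OF j12] unfolding U3_def by auto
  ultimately show False by blast
qed

lemma side2:
  assumes "jc Tc" "open U" "inside Tc \<inter> frontier U = {}" "P \<subseteq> Tc" "P \<subseteq> U" "P \<noteq> {}"
    "y \<in> Tc" "y \<notin> closure U"
  shows False
proof -
  obtain x where "x \<in> P" using assms(6) by blast
  moreover have "Tc \<subseteq> closure (inside Tc)" using jc_closure[OF assms(1)] by blast
  moreover have "connected (inside Tc)" using assms(1) unfolding jc_def by blast
  ultimately show False using side_lemma[OF assms(2) _ assms(3), of Tc x y] assms by blast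
qed

lemma jc_open: "jc J \<Longrightarrow> open (inside J)" "jc J \<Longrightarrow> open (outside J)"
  unfolding jc_def by blast+
lemma jc_front: "jc J \<Longrightarrow> frontier (inside J) = J" "jc J \<Longrightarrow> frontier (outside J) = J"
  unfolding jc_def by blast+

lemma conn_place:
  assumes "jc J" "connected P" "P \<inter> J = {}"
  shows "P \<subseteq> inside J \<or> P \<subseteq> outside J"
  apply (rule conn_split[OF assms(2)])
  using assms jc_part[OF assms(1)] jc_open[OF assms(1)] jc_disj[OF assms(1)] by auto

lemma theta_split:
  fixes c1 c2 c :: "real \<Rightarrow> complex"
  assumes "arc c1" "pathstart c1 = a" "pathfinish c1 = b"
      and "arc c2" "pathstart c2 = a" "pathfinish c2 = b"
      and "arc c" "pathstart c = a" "pathfinish c = b"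
      and "path_image c1 \<inter> path_image c2 = {a,b}"
      and "path_image c1 \<inter> path_image c = {a,b}"
      and "path_image c2 \<inter> path_image c = {a,b}"
      and "path_image c \<inter> inside(path_image c1 \<union> path_image c2) \<noteq> {}"
  shows "inside(path_image c1 \<union> path_image c) \<inter> inside(path_image c2 \<union> path_image c) = {}"
          "inside(path_image c1 \<union> path_image c) \<union> inside(path_image c2 \<union> path_image c) \<union>
           (path_image c - {a,b}) = inside(path_image c1 \<union> path_image c2)"
proof -
  have ab: "a \<noteq> b" using assms(1-3) by (metis arc_distinct_ends)
  show "inside(path_image c1 \<union> path_image c) \<inter> inside(path_image c2 \<union> path_image c) = {}"
          "inside(path_image c1 \<union> path_image c) \<union> inside(path_image c2 \<union> path_image c) \<union>
           (path_image c - {a,b}) = inside(path_image c1 \<union> path_image c2)"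
    using split_inside_simple_closed_curve[of c1 a b c2 c] assms ab
    by (auto simp: arc_imp_simple_path)
qed

lemma theta_middle:
  fixes c1 c2 c :: "real \<Rightarrow> complex"
  assumes "arc c1" "pathstart c1 = a" "pathfinish c1 = b"
      and "arc c2" "pathstart c2 = a" "pathfinish c2 = b"
      and "arc c" "pathstart c = a" "pathfinish c = b"
      and i12: "path_image c1 \<inter> path_image c2 = {a,b}"
      and i1c: "path_image c1 \<inter> path_image c = {a,b}"
      and i2c: "path_image c2 \<inter> path_image c = {a,b}"
  shows "path_image c \<inter> inside(path_image c1 \<union> path_image c2) \<noteq> {} \<or>
         path_image c1 \<inter> inside(path_image c2 \<union> path_image c) \<noteq> {} \<or>
         path_image c2 \<inter> inside(path_image c1 \<union> path_image c) \<noteq> {}"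
proof (rule ccontr)
  assume n: "\<not> ?thesis"
  have j12: "jc (path_image c1 \<union> path_image c2)"
    by (rule jc_arcs) (use assms in auto)
  have j1c: "jc (path_image c1 \<union> path_image c)"
    by (rule jc_arcs) (use assms in auto)
  have j2c: "jc (path_image c2 \<union> path_image c)"
    by (rule jc_arcs) (use assms in auto)
  obtain p1 where p1: "p1 \<in> path_image c1 - {a,b}"
    using nonempty_simple_path_endless[of c1] assms by (auto simp: arc_imp_simple_path)
  obtain p2 where p2: "p2 \<in> path_image c2 - {a,b}"
    using nonempty_simple_path_endless[of c2] assms by (auto simp: arc_imp_simple_path)
  obtain p where p: "p \<in> path_image c - {a,b}"
    using nonempty_simple_path_endless[of c] assms by (auto simp: arc_imp_simple_path)
  show False
  proof (rule theta_middle_sets[OF j12 j1c j2c])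
    show "path_image c1 \<inter> path_image c2 \<subseteq> path_image c"
      using i12 assms(8,9) by auto
    show "connected (path_image c)" using assms(7) by (simp add: arc_imp_path connected_path_image)
  qed (use n p1 p2 p i12 i1c i2c in auto)
qed

lemma main_topo:
  fixes c c' A :: "real \<Rightarrow> complex"
  assumes arcs: "arc c" "arc c'" "arc A"
    and ends: "pathstart c = p1" "pathfinish c = p3" "pathstart c' = p1" "pathfinish c' = p3"
              "pathstart A = p1" "pathfinish A = p3"
    and icc': "path_image c \<inter> path_image c' = {p1,p3}"
    and icA: "path_image c \<inter> path_image A = {p1,p3}"
    and ic'A: "path_image c' \<inter> path_image A = {p1,p3}"
    and q: "q \<in> path_image A" "q \<notin> {p1,p3}"
    and jT: "jc (path_image c \<union> Pb)" and PT: "P \<subseteq> path_image c \<union> Pb"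
    and Pc: "connected P" "P \<noteq> {}"
    and Pd: "P \<inter> (path_image c \<union> path_image c' \<union> path_image A) = {}"
    and iT: "inside (path_image c \<union> Pb) \<inter> (path_image c' \<union> path_image A) = {}"
    and jT': "jc (path_image c' \<union> Pb')" and PT': "P' \<subseteq> path_image c' \<union> Pb'"
    and Pc': "connected P'" "P' \<noteq> {}"
    and Pd': "P' \<inter> (path_image c \<union> path_image c' \<union> path_image A) = {}"
    and iT': "inside (path_image c' \<union> Pb') \<inter> (path_image c \<union> path_image A) = {}"
    and same: "(P \<subseteq> inside (path_image c \<union> path_image A) \<and> P' \<subseteq> inside (path_image c \<union> path_image A)) \<or>
               (P \<subseteq> outside (path_image c \<union> path_image A) \<and> P' \<subseteq> outside (path_image c \<union> path_image A))"
  shows "(q \<in> outside (path_image c \<union> path_image c') \<and>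
            (P \<subseteq> inside (path_image c \<union> path_image c') \<or> P' \<subseteq> inside (path_image c \<union> path_image c'))) \<or>
         (q \<in> inside (path_image c \<union> path_image c') \<and>
            (P \<subseteq> outside (path_image c \<union> path_image c') \<or> P' \<subseteq> outside (path_image c \<union> path_image c')))"
proof -
  define Th where "Th = path_image c"
  define Th' where "Th' = path_image c'"
  define ThA where "ThA = path_image A"
  define C where "C = Th \<union> ThA"
  define D where "D = Th \<union> Th'"
  define E where "E = Th' \<union> ThA"
  define Tc where "Tc = Th \<union> Pb"
  define Tc' where "Tc' = Th' \<union> Pb'"
  have jC: "jc C" unfolding C_def Th_def ThA_def by (rule jc_arcs) (use arcs ends icA in auto)
  have jD: "jc D" unfolding D_def Th_def Th'_def by (rule jc_arcs) (use arcs ends icc' in auto)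
  have jE: "jc E" unfolding E_def Th'_def ThA_def by (rule jc_arcs) (use arcs ends ic'A in auto)
  have jT: "jc Tc" using jT unfolding Tc_def Th_def .
  have jT': "jc Tc'" using jT' unfolding Tc'_def Th'_def .
  have iT: "inside Tc \<inter> E = {}" using iT unfolding Tc_def E_def Th_def Th'_def ThA_def .
  have iT': "inside Tc' \<inter> C = {}" using iT' unfolding Tc'_def C_def Th_def Th'_def ThA_def .
  have PT: "P \<subseteq> Tc" using PT unfolding Tc_def Th_def .
  have PT': "P' \<subseteq> Tc'" using PT' unfolding Tc'_def Th'_def .
  have PC: "P \<inter> C = {}" "P \<inter> D = {}" "P \<inter> E = {}" "P \<inter> ThA = {}" "P \<inter> Th = {}" "P \<inter> Th' = {}"
    using Pd unfolding C_def D_def E_def Th_def Th'_def ThA_def by auto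
  have PC': "P' \<inter> C = {}" "P' \<inter> D = {}" "P' \<inter> E = {}" "P' \<inter> ThA = {}" "P' \<inter> Th = {}" "P' \<inter> Th' = {}"
    using Pd' unfolding C_def D_def E_def Th_def Th'_def ThA_def by auto
  obtain r where r: "r \<in> Th" "r \<notin> {p1,p3}"
    using nonempty_simple_path_endless[of c] arcs ends unfolding Th_def by (auto simp: arc_imp_simple_path)
  obtain r' where r': "r' \<in> Th'" "r' \<notin> {p1,p3}"
    using nonempty_simple_path_endless[of c'] arcs ends unfolding Th'_def by (auto simp: arc_imp_simple_path)
  have rE: "r \<notin> E" "r \<in> C" "r \<in> D" "r \<in> Tc"
    using r icc' icA unfolding E_def C_def D_def Tc_def Th_def Th'_def ThA_def by auto
  have rC: "r' \<notin> C" "r' \<in> D" "r' \<in> E" "r' \<in> Tc'"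
    using r' icc' ic'A unfolding E_def C_def D_def Tc'_def Th_def Th'_def ThA_def by auto
  have qD: "q \<notin> D" "q \<in> C" "q \<in> E"
    using q icA ic'A unfolding E_def C_def D_def Th_def Th'_def ThA_def by auto
  have PinD: "P \<subseteq> inside D \<or> P \<subseteq> outside D" by (rule conn_place[OF jD Pc(1) PC(2)])
  have P'inD: "P' \<subseteq> inside D \<or> P' \<subseteq> outside D" by (rule conn_place[OF jD Pc'(1) PC'(2)])
  have PinE: "P \<subseteq> inside E \<or> P \<subseteq> outside E" by (rule conn_place[OF jE Pc(1) PC(3)])
  have P'inE: "P' \<subseteq> inside E \<or> P' \<subseteq> outside E" by (rule conn_place[OF jE Pc'(1) PC'(3)])
  have PinC: "P \<subseteq> inside C \<or> P \<subseteq> outside C" by (rule conn_place[OF jC Pc(1) PC(1)])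
  have P'inC: "P' \<subseteq> inside C \<or> P' \<subseteq> outside C" by (rule conn_place[OF jC Pc'(1) PC'(1)])
  have same: "(P \<subseteq> inside C \<and> P' \<subseteq> inside C) \<or> (P \<subseteq> outside C \<and> P' \<subseteq> outside C)"
    using same unfolding C_def Th_def ThA_def .
  have dC: "inside C \<inter> outside C = {}" "inside D \<inter> outside D = {}" "inside E \<inter> outside E = {}"
    using jc_disj jC jD jE by blast+
  have pC: "inside C \<union> outside C = - C" "inside D \<union> outside D = - D" "inside E \<union> outside E = - E"
    using jc_part jC jD jE by blast+
  have noC: "inside C \<inter> C = {}" "inside D \<inter> D = {}" "inside E \<inter> E = {}" by auto
  have clC: "closure (inside C) = inside C \<union> C" "closure (outside C) = outside C \<union> C"
    using jc_closure[OF jC] jc_closure_out[OF jC] by auto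
  have clE: "closure (inside E) = inside E \<union> E" "closure (outside E) = outside E \<union> E"
    using jc_closure[OF jE] jc_closure_out[OF jE] by auto
  have mid: "ThA \<inter> inside (Th \<union> Th') \<noteq> {} \<or> Th \<inter> inside (Th' \<union> ThA) \<noteq> {} \<or> Th' \<inter> inside (Th \<union> ThA) \<noteq> {}"
    unfolding Th_def Th'_def ThA_def
    by (rule theta_middle[of c p1 p3 c' A]) (use arcs ends icc' icA ic'A in auto)
  have "(q \<in> outside D \<and> (P \<subseteq> inside D \<or> P' \<subseteq> inside D)) \<or>
        (q \<in> inside D \<and> (P \<subseteq> outside D \<or> P' \<subseteq> outside D))"
  proof -
    consider (MA) "ThA \<inter> inside D \<noteq> {}" | (Mc) "Th \<inter> inside E \<noteq> {}" | (Mc') "Th' \<inter> inside C \<noteq> {}"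
      using mid unfolding C_def D_def E_def by blast
    then show ?thesis
    proof cases
      case MA
      have s: "inside C \<inter> inside E = {}" "inside C \<union> inside E \<union> (ThA - {p1,p3}) = inside D"
        using theta_split[of c p1 p3 c' A] arcs ends icc' icA ic'A MA
        unfolding C_def D_def E_def Th_def Th'_def ThA_def by (auto simp: Un_commute)
      have qi: "q \<in> inside D" using s(2) q unfolding ThA_def by blast
      have "P \<subseteq> outside D \<or> P' \<subseteq> outside D"
      proof (rule ccontr)
        assume "\<not> ?thesis"
        then have a: "P \<subseteq> inside D" "P' \<subseteq> inside D" using PinD P'inD by blast+
        have b: "P \<subseteq> inside C \<union> inside E" "P' \<subseteq> inside C \<union> inside E"
          using a s(2) PC(4) PC'(4) by blast+
        show False
        proof (cases "P' \<subseteq> inside C")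
          case True
          show False
          proof (rule side2[OF jT' jc_open(1)[OF jC] _ PT' True Pc'(2) rC(4)])
            show "inside Tc' \<inter> frontier (inside C) = {}" using iT' jc_front(1)[OF jC] by simp
            show "r' \<notin> closure (inside C)" using clC rC s(2) noC by blast
          qed
        next
          case False
          then have "P \<subseteq> outside C" "P' \<subseteq> outside C" using same by blast+
          then have "P \<subseteq> inside E" using b(1) dC(1) by blast
          show False
          proof (rule side2[OF jT jc_open(1)[OF jE] _ PT \<open>P \<subseteq> inside E\<close> Pc(2) rE(4)])
            show "inside Tc \<inter> frontier (inside E) = {}" using iT jc_front(1)[OF jE] by simp
            show "r \<notin> closure (inside E)" using clE rE s(2) noC by blast
          qed
        qed
      qed
      then show ?thesis using qi by blast
    next
      case Mc
      have s: "inside D \<inter> inside C = {}" "inside D \<union> inside C \<union> (Th - {p1,p3}) = inside E"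
        using theta_split[of c' p1 p3 A c] arcs ends icc' icA ic'A Mc
        unfolding C_def D_def E_def Th_def Th'_def ThA_def by (auto simp: Un_commute Int_commute)
      have qo: "q \<in> outside D" using s(2) qD noC pC by blast
      have "P \<subseteq> inside D \<or> P' \<subseteq> inside D"
      proof (rule ccontr)
        assume "\<not> ?thesis"
        then have a: "P \<subseteq> outside D" "P' \<subseteq> outside D" using PinD P'inD by blast+
        have "P \<subseteq> inside E"
        proof (rule ccontr)
          assume "\<not> P \<subseteq> inside E"
          then have "P \<subseteq> outside E" using PinE by blast
          show False
          proof (rule side2[OF jT jc_open(2)[OF jE] _ PT \<open>P \<subseteq> outside E\<close> Pc(2) rE(4)])
            show "inside Tc \<inter> frontier (outside E) = {}" using iT jc_front(2)[OF jE] by simp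
            show "r \<notin> closure (outside E)" using clE rE s(2) r dC by blast
          qed
        qed
        then have "P \<subseteq> inside C" using s(2) a(1) dC(2) PC(5) by blast
        then have "P' \<subseteq> inside C" using same dC(1) Pc(2) by blast
        show False
        proof (rule side2[OF jT' jc_open(1)[OF jC] _ PT' \<open>P' \<subseteq> inside C\<close> Pc'(2) rC(4)])
          show "inside Tc' \<inter> frontier (inside C) = {}" using iT' jc_front(1)[OF jC] by simp
          show "r' \<notin> closure (inside C)" using clC rC s(2) noC by blast
        qed
      qed
      then show ?thesis using qo by blast
    next
      case Mc'
      have s: "inside D \<inter> inside E = {}" "inside D \<union> inside E \<union> (Th' - {p1,p3}) = inside C"
        using theta_split[of c p1 p3 A c'] arcs ends icc' icA ic'A Mc'
        unfolding C_def D_def E_def Th_def Th'_def ThA_def by (auto simp: Un_commute Int_commute)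
      have qo: "q \<in> outside D" using s(2) qD noC pC by blast
      have "P \<subseteq> inside D \<or> P' \<subseteq> inside D"
      proof (rule ccontr)
        assume "\<not> ?thesis"
        then have a: "P \<subseteq> outside D" "P' \<subseteq> outside D" using PinD P'inD by blast+
        have "P \<subseteq> outside C"
        proof (rule ccontr)
          assume "\<not> P \<subseteq> outside C"
          then have "P \<subseteq> inside C" using PinC by blast
          then have "P \<subseteq> inside E" using s(2) a(1) dC(2) PC(6) by blast
          show False
          proof (rule side2[OF jT jc_open(1)[OF jE] _ PT \<open>P \<subseteq> inside E\<close> Pc(2) rE(4)])
            show "inside Tc \<inter> frontier (inside E) = {}" using iT jc_front(1)[OF jE] by simp
            show "r \<notin> closure (inside E)" using clE rE s(2) noC by blast
          qed
        qed
        then have "P' \<subseteq> outside C" using same dC(1) Pc(2) by blast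
        show False
        proof (rule side2[OF jT' jc_open(2)[OF jC] _ PT' \<open>P' \<subseteq> outside C\<close> Pc'(2) rC(4)])
          show "inside Tc' \<inter> frontier (outside C) = {}" using iT' jc_front(2)[OF jC] by simp
          show "r' \<notin> closure (outside C)" using clC rC r' s(2) dC by blast
        qed
      qed
      then show ?thesis using qo by blast
    qed
  qed
  then show ?thesis unfolding D_def Th_def Th'_def .
qed




lemma at_most_one_finite: "at_most_one S \<Longrightarrow> finite S"
  unfolding at_most_one_def
  by (metis finite.emptyI finite_insert subsetI singletonI subset_singletonD finite_subset insert_absorb)

lemma at_most_one_subset: "at_most_one S \<Longrightarrow> T \<subseteq> S \<Longrightarrow> at_most_one T"
  unfolding at_most_one_def by blast

lemma finite_crossing_points:
  assumes "finite E" "one_planar_drawing X Y E pos \<gamma>"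
  shows "finite (crossing_points E \<gamma>)"
proof -
  have eq: "crossing_points E \<gamma> = (\<Union>e\<in>E. \<Union>f\<in>E - {e}. edge_int (\<gamma> e) \<inter> edge_int (\<gamma> f))"
    unfolding crossing_points_def by blast
  have fin: "finite (edge_int (\<gamma> e) \<inter> edge_int (\<gamma> f))" if "e \<in> E" "f \<in> E - {e}" for e f
  proof -
    have "e \<noteq> f" "f \<in> E" using that by auto
    then have "at_most_one (edge_int (\<gamma> e) \<inter> edge_int (\<gamma> f))"
      using assms(2) that(1) unfolding one_planar_drawing_def drawing_def by blast
    then show ?thesis by (rule at_most_one_finite)
  qed
  show ?thesis unfolding eq
    apply (rule finite_UN_I[OF assms(1)])
    apply (rule finite_UN_I)
    using assms(1) fin by auto
qed

lemma drawing_points_edge: "e \<in> E \<Longrightarrow> path_image (\<gamma> e) \<subseteq> drawing_points X Y E pos \<gamma>"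
  unfolding drawing_points_def by blast

lemma drawing_points_vertex: "v \<in> X \<union> Y \<Longrightarrow> pos v \<in> drawing_points X Y E pos \<gamma>"
  unfolding drawing_points_def by blast

lemma edge_int_sub: "edge_int g \<subseteq> path_image g" unfolding edge_int_def by blast

lemma redraw:
  assumes op: "one_planar_drawing X Y E pos \<gamma>" and finE: "finite E"
    and EXY: "E \<subseteq> X \<times> Y" and XY: "X \<inter> Y = {}" and y: "y \<in> Y"
    and hy: "\<forall>f\<in>E. snd f = y \<longrightarrow> fst f = x1 \<or> fst f = x3"
    and x13: "x1 \<noteq> x3" "x1 \<in> X" "x3 \<in> X"
    and g: "arc g" "pathstart g = pos x1" "pathfinish g = pos x3"
      "edge_int g \<inter> drawing_points X Y E pos \<gamma> = {}"
    and e0: "e0 \<in> E" "snd e0 = y" and e1: "e1 \<in> E" "e1 \<noteq> e0"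
    and u: "u \<in> edge_int (\<gamma> e0)" "u \<in> edge_int (\<gamma> e1)"
  shows "\<exists>pos' \<gamma>'. one_planar_drawing X Y E pos' \<gamma>' \<and>
           card (crossing_points E \<gamma>') < card (crossing_points E \<gamma>)"
proof -
  have dr: "drawing X Y E pos \<gamma>" using op unfolding one_planar_drawing_def by (rule conjunct1)
  have opl: "\<forall>e\<in>E. at_most_one (crossings_on E \<gamma> e)"
    using op unfolding one_planar_drawing_def by (rule conjunct2)
  obtain inj: "inj_on pos (X \<union> Y)"
    and A1: "\<forall>e\<in>E. arc (\<gamma> e) \<and> pathstart (\<gamma> e) = pos (fst e) \<and> pathfinish (\<gamma> e) = pos (snd e)"
    and A2: "\<forall>e\<in>E. \<forall>v\<in>X \<union> Y. pos v \<in> path_image (\<gamma> e) \<longrightarrow> v = fst e \<or> v = snd e"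
    and A3: "\<forall>e\<in>E. \<forall>f\<in>E. e \<noteq> f \<longrightarrow> at_most_one (edge_int (\<gamma> e) \<inter> edge_int (\<gamma> f))"
    and A4: "\<forall>e\<in>E. \<forall>f\<in>E. e \<noteq> f \<and> {fst e, snd e} \<inter> {fst f, snd f} \<noteq> {} \<longrightarrow>
         edge_int (\<gamma> e) \<inter> edge_int (\<gamma> f) = {}"
    using dr unfolding drawing_def by (elim conjE)
  have arcs: "\<And>e. e \<in> E \<Longrightarrow> arc (\<gamma> e) \<and> pathstart (\<gamma> e) = pos (fst e) \<and> pathfinish (\<gamma> e) = pos (snd e)"
    using A1 by blast
  have vtx: "\<And>e v. e \<in> E \<Longrightarrow> v \<in> X \<union> Y \<Longrightarrow> pos v \<in> path_image (\<gamma> e) \<Longrightarrow> v = fst e \<or> v = snd e"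
    using A2 by blast
  have amo: "\<And>e f. e \<in> E \<Longrightarrow> f \<in> E \<Longrightarrow> e \<noteq> f \<Longrightarrow> at_most_one (edge_int (\<gamma> e) \<inter> edge_int (\<gamma> f))"
    using A3 by blast
  have adj: "\<And>e f. e \<in> E \<Longrightarrow> f \<in> E \<Longrightarrow> e \<noteq> f \<Longrightarrow> {fst e, snd e} \<inter> {fst f, snd f} \<noteq> {} \<Longrightarrow>
         edge_int (\<gamma> e) \<inter> edge_int (\<gamma> f) = {}"
    using A4 by blast
  let ?DP = "drawing_points X Y E pos \<gamma>"
  have injg: "inj_on g {0..1}" using g(1) by (simp add: arc_def)
  define r where "r = g (1/2)"
  define s1 where "s1 = subpath 0 (1/2) g"
  define s3 where "s3 = subpath 1 (1/2) g"
  have s1a: "arc s1" unfolding s1_def by (rule arc_subpath_arc[OF g(1)]) auto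
  have s3a: "arc s3" unfolding s3_def by (rule arc_subpath_arc[OF g(1)]) auto
  have s1e: "pathstart s1 = pos x1" "pathfinish s1 = r" unfolding s1_def r_def using g
    by (auto simp: pathstart_def pathfinish_def subpath_def)
  have s3e: "pathstart s3 = pos x3" "pathfinish s3 = r" unfolding s3_def r_def using g
    by (auto simp: pathstart_def pathfinish_def subpath_def)
  have s1i: "path_image s1 = g ` {0..1/2}" unfolding s1_def by (simp add: path_image_subpath)
  have s3i: "path_image s3 = g ` {1/2..1}" unfolding s3_def by (simp add: path_image_subpath)
  have g0: "g 0 = pos x1" "g 1 = pos x3" using g by (auto simp: pathstart_def pathfinish_def)
  have rint: "r \<in> edge_int g"
  proof -
    have "r \<in> path_image g" unfolding r_def path_image_def by auto
    moreover have "r \<noteq> g 0" "r \<noteq> g 1" unfolding r_def using injg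
      by (auto dest: inj_onD[of g "{0..1}" "1/2"])
    ultimately show ?thesis unfolding edge_int_def using g0 g by auto
  qed
  have rDP: "r \<notin> ?DP" using rint g(4) by blast
  have x3s1: "pos x3 \<notin> path_image s1"
  proof
    assume "pos x3 \<in> path_image s1"
    then obtain t where "t \<in> {0..1/2}" "g t = g 1" using s1i g0 by auto
    then show False using injg by (auto dest: inj_onD[of g "{0..1}" t 1])
  qed
  have x1s3: "pos x1 \<notin> path_image s3"
  proof
    assume "pos x1 \<in> path_image s3"
    then obtain t where "t \<in> {1/2..1}" "g t = g 0" using s3i g0 by auto
    then show False using injg by (auto dest: inj_onD[of g "{0..1}" t 0])
  qed
  have s1sub: "path_image s1 \<subseteq> path_image g" "path_image s3 \<subseteq> path_image g"
    unfolding s1i s3i by (auto simp add: path_image_def intro!: image_mono)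
  have ei1: "edge_int s1 \<subseteq> edge_int g" using s1sub x3s1 s1e g
    unfolding edge_int_def by auto
  have ei3: "edge_int s3 \<subseteq> edge_int g" using s1sub x1s3 s3e g
    unfolding edge_int_def by auto
  have s13: "path_image s1 \<inter> path_image s3 \<subseteq> {r}"
  proof
    fix p assume "p \<in> path_image s1 \<inter> path_image s3"
    then obtain a b where ab: "a \<in> {0..1/2}" "b \<in> {1/2..1}" "p = g a" "p = g b"
      using s1i s3i by auto
    then have "a = b" using injg by (auto dest: inj_onD[of g "{0..1}" a b])
    then have "a = 1/2" using ab by auto
    then have "p = r" using ab(3) unfolding r_def by (simp only:)
    then show "p \<in> {r}" by simp
  qed
  have ei13: "edge_int s1 \<inter> edge_int s3 = {}"
    using s13 s1e unfolding edge_int_def by auto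
  define pos' where "pos' = pos(y := r)"
  define \<gamma>' where "\<gamma>' = (\<lambda>e. if snd e = y then (if fst e = x1 then s1 else s3) else \<gamma> e)"
  have fstX: "fst e \<in> X" "snd e \<in> Y" "fst e \<noteq> y" if "e \<in> E" for e
  proof -
    have "e \<in> X \<times> Y" using that EXY by blast
    then show "fst e \<in> X" "snd e \<in> Y" "fst e \<noteq> y" using XY y by (auto simp: mem_Times_iff)
  qed
  have new_int: "edge_int (\<gamma>' e) \<subseteq> edge_int g" if "e \<in> E" "snd e = y" for e
    using that ei1 ei3 unfolding \<gamma>'_def by auto
  have old_DP: "path_image (\<gamma> e) \<subseteq> ?DP" if "e \<in> E" for e
    using drawing_points_edge[OF that] .
  have key: "edge_int (\<gamma>' e) \<inter> edge_int (\<gamma>' f) =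
        (if snd e = y \<or> snd f = y then {} else edge_int (\<gamma> e) \<inter> edge_int (\<gamma> f))"
    if "e \<in> E" "f \<in> E" "e \<noteq> f" for e f
  proof (cases "snd e = y")
    case True
    note eT = True
    show ?thesis
    proof (cases "snd f = y")
      case True
      then have "fst e \<noteq> fst f" using eT that by (metis prod.expand)
      moreover have "fst e = x1 \<or> fst e = x3" "fst f = x1 \<or> fst f = x3"
        using hy that(1,2) eT True by blast+
      ultimately have "(fst e = x1 \<and> fst f \<noteq> x1) \<or> (fst e \<noteq> x1 \<and> fst f = x1)" by auto
      then show ?thesis using eT True ei13 unfolding \<gamma>'_def by auto
    next
      case False
      have "edge_int (\<gamma>' f) \<subseteq> ?DP" using old_DP[OF that(2)] edge_int_sub[of "\<gamma> f"] False
        unfolding \<gamma>'_def by auto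
      then show ?thesis using new_int[OF that(1) eT] g(4) eT by auto
    qed
  next
    case False
    note eF = False
    show ?thesis
    proof (cases "snd f = y")
      case True
      have "edge_int (\<gamma>' e) \<subseteq> ?DP" using old_DP[OF that(1)] edge_int_sub[of "\<gamma> e"] eF
        unfolding \<gamma>'_def by auto
      then show ?thesis using new_int[OF that(2) True] g(4) True by auto
    next
      case False
      then show ?thesis using eF unfolding \<gamma>'_def by auto
    qed
  qed
  have D1: "inj_on pos' (X \<union> Y)"
    proof (rule inj_onI)
      fix a b assume ab: "a \<in> X \<union> Y" "b \<in> X \<union> Y" "pos' a = pos' b"
      have "r \<noteq> pos v" if "v \<in> X \<union> Y" for v using rDP drawing_points_vertex[OF that] by metis
      then show "a = b" using ab inj unfolding pos'_def
        by (cases "a = y"; cases "b = y") (auto dest: inj_onD)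
  qed
  have D2: "\<forall>e\<in>E. arc (\<gamma>' e) \<and> pathstart (\<gamma>' e) = pos' (fst e) \<and> pathfinish (\<gamma>' e) = pos' (snd e)"
  proof
    fix e assume e: "e \<in> E"
    show "arc (\<gamma>' e) \<and> pathstart (\<gamma>' e) = pos' (fst e) \<and> pathfinish (\<gamma>' e) = pos' (snd e)"
    proof (cases "snd e = y")
      case True
      then have "fst e = x1 \<or> fst e = x3" using hy e by blast
      then show ?thesis using True s1a s3a s1e s3e fstX[OF e] unfolding \<gamma>'_def pos'_def by auto
    next
      case False
      then show ?thesis using arcs[OF e] fstX[OF e] unfolding \<gamma>'_def pos'_def by auto
    qed
  qed
  have D3: "\<forall>e\<in>E. \<forall>v\<in>X \<union> Y. pos' v \<in> path_image (\<gamma>' e) \<longrightarrow> v = fst e \<or> v = snd e"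
  proof (intro ballI impI)
    fix e v assume e: "e \<in> E" and v: "v \<in> X \<union> Y" and pv: "pos' v \<in> path_image (\<gamma>' e)"
    show "v = fst e \<or> v = snd e"
    proof (cases "snd e = y")
      case True
      note eT = True
      show ?thesis
      proof (cases "v = y")
        case True then show ?thesis using eT by simp
      next
        case False
        then have pv': "pos v \<in> path_image (\<gamma>' e)" using pv unfolding pos'_def by simp
        have "pos v \<in> ?DP" using drawing_points_vertex[OF v] .
        then have "pos v \<notin> edge_int g" using g(4) by blast
        moreover have "pos v \<in> path_image g" using pv' s1sub eT unfolding \<gamma>'_def by (auto split: if_splits)
        ultimately have "pos v = pos x1 \<or> pos v = pos x3" unfolding edge_int_def using g by auto
        then have vv: "v = x1 \<or> v = x3" using inj v x13 by (auto dest: inj_onD)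
        have "fst e = x1 \<or> fst e = x3" using hy e eT by blast
        then show ?thesis using vv pv' x3s1 x1s3 x13(1) eT unfolding \<gamma>'_def by auto
      qed
    next
      case False
      show ?thesis
      proof (cases "v = y")
        case True
        then have "r \<in> path_image (\<gamma> e)" using pv False unfolding pos'_def \<gamma>'_def by simp
        then show ?thesis using old_DP[OF e] rDP by blast
      next
        case vF: False
        then have "pos v \<in> path_image (\<gamma> e)" using pv False unfolding pos'_def \<gamma>'_def by simp
        then show ?thesis using vtx[OF e v] by blast
      qed
    qed
  qed
  have D4: "\<forall>e\<in>E. \<forall>f\<in>E. e \<noteq> f \<longrightarrow> at_most_one (edge_int (\<gamma>' e) \<inter> edge_int (\<gamma>' f))"
  proof (intro ballI impI)
    fix e f assume e: "e \<in> E" and f: "f \<in> E"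
    assume "e \<noteq> f"
    then show "at_most_one (edge_int (\<gamma>' e) \<inter> edge_int (\<gamma>' f))"
      using key[OF e f] amo[OF e f] unfolding at_most_one_def by (auto split: if_splits)
  qed
  have D5: "\<forall>e\<in>E. \<forall>f\<in>E. e \<noteq> f \<and> {fst e, snd e} \<inter> {fst f, snd f} \<noteq> {} \<longrightarrow>
         edge_int (\<gamma>' e) \<inter> edge_int (\<gamma>' f) = {}"
  proof (intro ballI impI)
    fix e f assume e: "e \<in> E" and f: "f \<in> E"
    assume h: "e \<noteq> f \<and> {fst e, snd e} \<inter> {fst f, snd f} \<noteq> {}"
    then show "edge_int (\<gamma>' e) \<inter> edge_int (\<gamma>' f) = {}"
      using key[OF e f] adj[OF e f] by (auto split: if_splits)
  qed
  have drw: "drawing X Y E pos' \<gamma>'"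
    unfolding drawing_def by (intro conjI, fact D1, fact D2, fact D3, fact D4, fact D5)
  have cr_sub: "crossings_on E \<gamma>' e \<subseteq> crossings_on E \<gamma> e" if "e \<in> E" for e
  proof
    fix z assume "z \<in> crossings_on E \<gamma>' e"
    then obtain f p where z: "z = (f, p)" "f \<in> E" "f \<noteq> e" "p \<in> edge_int (\<gamma>' e) \<inter> edge_int (\<gamma>' f)"
      unfolding crossings_on_def by blast
    then have "p \<in> edge_int (\<gamma> e) \<inter> edge_int (\<gamma> f)"
      using key[OF that z(2)] by (auto split: if_splits)
    then show "z \<in> crossings_on E \<gamma> e" using z unfolding crossings_on_def by blast
  qed
  have op': "one_planar_drawing X Y E pos' \<gamma>'"
    unfolding one_planar_drawing_def using drw cr_sub opl at_most_one_subset by blast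
  have cp_sub: "crossing_points E \<gamma>' \<subseteq> crossing_points E \<gamma> - {u}"
  proof
    fix p assume "p \<in> crossing_points E \<gamma>'"
    then obtain e f where ef: "e \<in> E" "f \<in> E" "e \<noteq> f" "p \<in> edge_int (\<gamma>' e) \<inter> edge_int (\<gamma>' f)"
      unfolding crossing_points_def by blast
    then have old: "snd e \<noteq> y" "snd f \<noteq> y" "p \<in> edge_int (\<gamma> e) \<inter> edge_int (\<gamma> f)"
      using key[OF ef(1-3)] by (auto split: if_splits)
    have "p \<noteq> u"
    proof
      assume pu: "p = u"
      have "e \<noteq> e0" "f \<noteq> e0" using old e0 by auto
      then have "(e, u) \<in> crossings_on E \<gamma> e0" "(f, u) \<in> crossings_on E \<gamma> e0"
        using ef old pu u e0 unfolding crossings_on_def by auto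
      then have "e = f" using opl e0(1) unfolding at_most_one_def by blast
      then show False using ef by blast
    qed
    then show "p \<in> crossing_points E \<gamma> - {u}" using ef old unfolding crossing_points_def by blast
  qed
  have "u \<in> crossing_points E \<gamma>" using u e0 e1 unfolding crossing_points_def by blast
  then have "crossing_points E \<gamma>' \<subset> crossing_points E \<gamma>" using cp_sub by blast
  then have "card (crossing_points E \<gamma>') < card (crossing_points E \<gamma>)"
    using psubset_card_mono finite_crossing_points[OF finE op] by blast
  then show ?thesis using op' by blast
qed




lemma blacks_X: "E \<subseteq> X \<times> Y \<Longrightarrow> blacks E \<gamma> w \<subseteq> X"
  unfolding blacks_def by auto

lemma half:
  assumes "arc g" "p \<in> edge_int g"
  defines "t \<equiv> SOME t. 0 \<le> t \<and> t \<le> 1 \<and> g t = p"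
  shows "0 < t" "t < 1" "g t = p" "seg_to g p = g ` {0..t}"
proof -
  have "p \<in> path_image g" using assms(2) edge_int_sub by blast
  then have "\<exists>t. 0 \<le> t \<and> t \<le> 1 \<and> g t = p" unfolding path_image_def by auto
  then have t: "0 \<le> t \<and> t \<le> 1 \<and> g t = p" unfolding t_def by (rule someI_ex)
  have "p \<noteq> g 0" "p \<noteq> g 1" using assms(2) unfolding edge_int_def pathstart_def pathfinish_def by auto
  then show "0 < t" "t < 1" "g t = p" using t by (auto simp: order.order_iff_strict)
  show "seg_to g p = g ` {0..t}" unfolding seg_to_def t_def ..
qed

lemma orient:
  assumes "arc g" "{pathstart g, pathfinish g} = {a, b}" "a \<noteq> b"
  obtains g' where "arc g'" "pathstart g' = a" "pathfinish g' = b" "path_image g' = path_image g"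
    "edge_int g' = edge_int g"
proof (cases "pathstart g = a")
  case True
  then have "pathfinish g = b" using assms by (metis doubleton_eq_iff)
  then show ?thesis using that[of g] assms True by blast
next
  case False
  then have "pathstart g = b" "pathfinish g = a" using assms by (metis doubleton_eq_iff)+
  then show ?thesis using that[of "reversepath g"] assms
    by (auto simp: arc_reversepath edge_int_def)
qed

lemma cross_struct:
  assumes op: "one_planar_drawing X Y E pos \<gamma>"
    and u: "u \<in> crossing_points E \<gamma>" "blacks E \<gamma> u = {x1, x3}" "x1 \<noteq> x3"
  obtains e1 e3 where "e1 \<in> E" "e3 \<in> E" "fst e1 = x1" "fst e3 = x3"
    "u \<in> edge_int (\<gamma> e1)" "u \<in> edge_int (\<gamma> e3)"
    "\<And>e. e \<in> E \<Longrightarrow> u \<in> edge_int (\<gamma> e) \<Longrightarrow> e = e1 \<or> e = e3"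
proof -
  have "x1 \<in> blacks E \<gamma> u" "x3 \<in> blacks E \<gamma> u" using u by auto
  then obtain e1 e3 where e: "e1 \<in> E" "u \<in> edge_int (\<gamma> e1)" "fst e1 = x1"
    "e3 \<in> E" "u \<in> edge_int (\<gamma> e3)" "fst e3 = x3"
    unfolding blacks_def by blast
  have opl: "\<forall>e\<in>E. at_most_one (crossings_on E \<gamma> e)"
    using op unfolding one_planar_drawing_def by (rule conjunct2)
  have "e = e1 \<or> e = e3" if "e \<in> E" "u \<in> edge_int (\<gamma> e)" for e
  proof (rule ccontr)
    assume ne: "\<not> (e = e1 \<or> e = e3)"
    have "e1 \<noteq> e3" using e u(3) by auto
    then have "(e3, u) \<in> crossings_on E \<gamma> e1" "(e, u) \<in> crossings_on E \<gamma> e1"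
      using e that ne unfolding crossings_on_def by auto
    then have "e = e3" using opl e(1) unfolding at_most_one_def by blast
    then show False using ne by blast
  qed
  then show ?thesis using that e by blast
qed

lemma arc_inner: "arc g \<Longrightarrow> 0 < a \<Longrightarrow> a < 1 \<Longrightarrow> g a \<in> edge_int g"
  unfolding edge_int_def arc_def pathstart_def pathfinish_def path_image_def
  by (auto dest: inj_onD)

lemma drawing_facts:
  assumes "one_planar_drawing X Y E pos \<gamma>"
  shows "inj_on pos (X \<union> Y)"
    "\<And>e. e \<in> E \<Longrightarrow> arc (\<gamma> e)"
    "\<And>e. e \<in> E \<Longrightarrow> pathstart (\<gamma> e) = pos (fst e)"
    "\<And>e. e \<in> E \<Longrightarrow> pathfinish (\<gamma> e) = pos (snd e)"
    "\<And>e v. e \<in> E \<Longrightarrow> v \<in> X \<union> Y \<Longrightarrow> pos v \<in> path_image (\<gamma> e) \<Longrightarrow> v = fst e \<or> v = snd e"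
    "\<And>e f. e \<in> E \<Longrightarrow> f \<in> E \<Longrightarrow> e \<noteq> f \<Longrightarrow> at_most_one (edge_int (\<gamma> e) \<inter> edge_int (\<gamma> f))"
proof -
  have dr: "drawing X Y E pos \<gamma>" using assms unfolding one_planar_drawing_def by (rule conjunct1)
  obtain inj: "inj_on pos (X \<union> Y)"
    and A1: "\<forall>e\<in>E. arc (\<gamma> e) \<and> pathstart (\<gamma> e) = pos (fst e) \<and> pathfinish (\<gamma> e) = pos (snd e)"
    and A2: "\<forall>e\<in>E. \<forall>v\<in>X \<union> Y. pos v \<in> path_image (\<gamma> e) \<longrightarrow> v = fst e \<or> v = snd e"
    and A3: "\<forall>e\<in>E. \<forall>f\<in>E. e \<noteq> f \<longrightarrow> at_most_one (edge_int (\<gamma> e) \<inter> edge_int (\<gamma> f))"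
    using dr unfolding drawing_def by (elim conjE)
  show "inj_on pos (X \<union> Y)" by (rule inj)
  show "\<And>e. e \<in> E \<Longrightarrow> arc (\<gamma> e)" using A1 by blast
  show "\<And>e. e \<in> E \<Longrightarrow> pathstart (\<gamma> e) = pos (fst e)" using A1 by blast
  show "\<And>e. e \<in> E \<Longrightarrow> pathfinish (\<gamma> e) = pos (snd e)" using A1 by blast
  show "\<And>e v. e \<in> E \<Longrightarrow> v \<in> X \<union> Y \<Longrightarrow> pos v \<in> path_image (\<gamma> e) \<Longrightarrow> v = fst e \<or> v = snd e"
    using A2 by blast
  show "\<And>e f. e \<in> E \<Longrightarrow> f \<in> E \<Longrightarrow> e \<noteq> f \<Longrightarrow> at_most_one (edge_int (\<gamma> e) \<inter> edge_int (\<gamma> f))"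
    using A3 by blast
qed

lemma black_on_edge:
  assumes "one_planar_drawing X Y E pos \<gamma>" "E \<subseteq> X \<times> Y" "X \<inter> Y = {}"
    "e \<in> E" "v \<in> X" "pos v \<in> path_image (\<gamma> e)"
  shows "v = fst e"
proof -
  have "v = fst e \<or> v = snd e" using drawing_facts(5)[OF assms(1) assms(4) _ assms(6)] assms(5) by blast
  moreover have "snd e \<in> Y" using assms(2,4) by auto
  ultimately show ?thesis using assms(3,5) by blast
qed

lemma two_path_arc:
  assumes op: "one_planar_drawing X Y E pos \<gamma>" and EXY: "E \<subseteq> X \<times> Y" and XY: "X \<inter> Y = {}"
    and u: "u \<in> crossing_points E \<gamma>" "blacks E \<gamma> u = {x1, x3}" "x1 \<noteq> x3"
  obtains pb where "arc pb" "pathstart pb = pos x1" "pathfinish pb = pos x3"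
    "path_image pb = two_path E \<gamma> u"
    "two_path E \<gamma> u \<subseteq> drawing_points X Y E pos \<gamma>"
    "\<And>v. v \<in> X \<union> Y \<Longrightarrow> pos v \<in> two_path E \<gamma> u \<Longrightarrow> v = x1 \<or> v = x3"
    "u \<in> two_path E \<gamma> u"
proof -
  obtain e1 e3 where e: "e1 \<in> E" "e3 \<in> E" "fst e1 = x1" "fst e3 = x3"
    "u \<in> edge_int (\<gamma> e1)" "u \<in> edge_int (\<gamma> e3)"
    and uniq: "\<And>e. e \<in> E \<Longrightarrow> u \<in> edge_int (\<gamma> e) \<Longrightarrow> e = e1 \<or> e = e3"
    using cross_struct[OF op u] by blast
  have tp: "two_path E \<gamma> u = seg_to (\<gamma> e1) u \<union> seg_to (\<gamma> e3) u"
  proof -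
    have "{seg_to (\<gamma> e) u | e. e \<in> E \<and> u \<in> edge_int (\<gamma> e)} = {seg_to (\<gamma> e1) u, seg_to (\<gamma> e3) u}"
      using e uniq by blast
    then show ?thesis unfolding two_path_def by simp
  qed
  have a1: "arc (\<gamma> e1)" and a3: "arc (\<gamma> e3)" using drawing_facts(2)[OF op] e by auto
  define t1 where "t1 = (SOME t. 0 \<le> t \<and> t \<le> 1 \<and> \<gamma> e1 t = u)"
  define t3 where "t3 = (SOME t. 0 \<le> t \<and> t \<le> 1 \<and> \<gamma> e3 t = u)"
  have h1: "0 < t1" "t1 < 1" "\<gamma> e1 t1 = u" "seg_to (\<gamma> e1) u = \<gamma> e1 ` {0..t1}"
    using half[OF a1 e(5)] unfolding t1_def by auto
  have h3: "0 < t3" "t3 < 1" "\<gamma> e3 t3 = u" "seg_to (\<gamma> e3) u = \<gamma> e3 ` {0..t3}"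
    using half[OF a3 e(6)] unfolding t3_def by auto
  define g1 where "g1 = subpath 0 t1 (\<gamma> e1)"
  define g3 where "g3 = subpath 0 t3 (\<gamma> e3)"
  have g1: "arc g1" "pathstart g1 = pos x1" "pathfinish g1 = u" "path_image g1 = \<gamma> e1 ` {0..t1}"
  proof -
    show "arc g1" unfolding g1_def by (rule arc_subpath_arc[OF a1]) (use h1 in auto)
    show "pathstart g1 = pos x1" unfolding g1_def using drawing_facts(3)[OF op e(1)] e(3)
      by (simp add: pathstart_def subpath_def)
    show "pathfinish g1 = u" unfolding g1_def using h1
      by (simp add: pathfinish_def subpath_def)
    show "path_image g1 = \<gamma> e1 ` {0..t1}" unfolding g1_def using h1
      by (simp add: path_image_subpath)
  qed
  have g3: "arc g3" "pathstart g3 = pos x3" "pathfinish g3 = u" "path_image g3 = \<gamma> e3 ` {0..t3}"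
  proof -
    show "arc g3" unfolding g3_def by (rule arc_subpath_arc[OF a3]) (use h3 in auto)
    show "pathstart g3 = pos x3" unfolding g3_def using drawing_facts(3)[OF op e(2)] e(4)
      by (simp add: pathstart_def subpath_def)
    show "pathfinish g3 = u" unfolding g3_def using h3
      by (simp add: pathfinish_def subpath_def)
    show "path_image g3 = \<gamma> e3 ` {0..t3}" unfolding g3_def using h3
      by (simp add: path_image_subpath)
  qed
  have inj1: "inj_on (\<gamma> e1) {0..1}" and inj3: "inj_on (\<gamma> e3) {0..1}" using a1 a3 by (auto simp: arc_def)
  have x1X: "x1 \<in> X" "x3 \<in> X" using e EXY by auto
  have notx3: "pos x3 \<notin> path_image (\<gamma> e1)"
    using black_on_edge[OF op EXY XY e(1) x1X(2)] e u(3) by auto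
  have notx1: "pos x1 \<notin> path_image (\<gamma> e3)"
    using black_on_edge[OF op EXY XY e(2) x1X(1)] e u(3) by auto
  have int: "path_image g1 \<inter> path_image g3 \<subseteq> {u}"
  proof
    fix p assume p: "p \<in> path_image g1 \<inter> path_image g3"
    then obtain a b where ab: "a \<in> {0..t1}" "b \<in> {0..t3}" "p = \<gamma> e1 a" "p = \<gamma> e3 b"
      using g1 g3 by auto
    have "p \<in> path_image (\<gamma> e1)" using ab(1,3) h1(2) unfolding path_image_def by auto
    have "p \<in> path_image (\<gamma> e3)" using ab(2,4) h3(2) unfolding path_image_def by auto
    have "a \<noteq> 0"
    proof
      assume "a = 0"
      then have "p = pos x1" using ab drawing_facts(3)[OF op e(1)] e(3) by (simp add: pathstart_def)
      then show False using notx1 \<open>p \<in> path_image (\<gamma> e3)\<close> by simp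
    qed
    have "b \<noteq> 0"
    proof
      assume "b = 0"
      then have "p = pos x3" using ab drawing_facts(3)[OF op e(2)] e(4) by (simp add: pathstart_def)
      then show False using notx3 \<open>p \<in> path_image (\<gamma> e1)\<close> by simp
    qed
    have "p \<in> edge_int (\<gamma> e1)" using arc_inner[OF a1, of a] ab h1 \<open>a \<noteq> 0\<close> by auto
    moreover have "p \<in> edge_int (\<gamma> e3)" using arc_inner[OF a3, of b] ab h3 \<open>b \<noteq> 0\<close> by auto
    moreover have "e1 \<noteq> e3" using e u(3) by auto
    ultimately show "p \<in> {u}" using drawing_facts(6)[OF op e(1,2)] e(5,6) unfolding at_most_one_def by blast
  qed
  define pb where "pb = g1 +++ reversepath g3"
  have "arc pb" unfolding pb_def
    by (rule arc_join) (use g1 g3 int in \<open>auto simp: arc_reversepath\<close>)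
  moreover have "pathstart pb = pos x1" "pathfinish pb = pos x3" unfolding pb_def using g1 g3 by auto
  moreover have pi: "path_image pb = two_path E \<gamma> u" unfolding pb_def tp h1(4) h3(4)
    using g1 g3 by (simp add: path_image_join)
  moreover have "two_path E \<gamma> u \<subseteq> drawing_points X Y E pos \<gamma>"
    unfolding tp h1(4) h3(4) using drawing_points_edge[OF e(1), of \<gamma> X Y pos] drawing_points_edge[OF e(2), of \<gamma> X Y pos]
      h1 h3 unfolding path_image_def by auto
  moreover have "v = x1 \<or> v = x3" if v: "v \<in> X \<union> Y" "pos v \<in> two_path E \<gamma> u" for v
  proof -
    have "pos v \<in> \<gamma> e1 ` {0..t1} \<or> pos v \<in> \<gamma> e3 ` {0..t3}" using v(2) unfolding tp h1(4) h3(4) by blast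
    then show ?thesis
    proof
      assume "pos v \<in> \<gamma> e1 ` {0..t1}"
      then obtain a where a: "a \<in> {0..t1}" "pos v = \<gamma> e1 a" by auto
      then have "pos v \<in> path_image (\<gamma> e1)" using h1 unfolding path_image_def by auto
      then have "v = fst e1 \<or> v = snd e1" using drawing_facts(5)[OF op e(1) v(1)] by blast
      moreover have "pos (snd e1) = \<gamma> e1 1" using drawing_facts(4)[OF op e(1)] by (simp add: pathfinish_def)
      moreover have "\<gamma> e1 1 \<noteq> \<gamma> e1 a" using a h1 inj1 by (auto dest: inj_onD[of _ _ 1 a])
      ultimately show ?thesis using a e(3) by auto
    next
      assume "pos v \<in> \<gamma> e3 ` {0..t3}"
      then obtain a where a: "a \<in> {0..t3}" "pos v = \<gamma> e3 a" by auto
      then have "pos v \<in> path_image (\<gamma> e3)" using h3 unfolding path_image_def by auto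
      then have "v = fst e3 \<or> v = snd e3" using drawing_facts(5)[OF op e(2) v(1)] by blast
      moreover have "pos (snd e3) = \<gamma> e3 1" using drawing_facts(4)[OF op e(2)] by (simp add: pathfinish_def)
      moreover have "\<gamma> e3 1 \<noteq> \<gamma> e3 a" using a h3 inj3 by (auto dest: inj_onD[of _ _ 1 a])
      ultimately show ?thesis using a e(4) by auto
    qed
  qed
  moreover have "u \<in> two_path E \<gamma> u" unfolding tp h1(4) using h1 by auto
  ultimately show ?thesis using that by blast
qed

lemma finish:
  assumes op: "one_planar_drawing X Y E pos \<gamma>" and finE: "finite E"
    and EXY: "E \<subseteq> X \<times> Y" and XY: "X \<inter> Y = {}"
    and min: "\<forall>pos' \<gamma>'. one_planar_drawing X Y E pos' \<gamma>' \<longrightarrow>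
                 card (crossing_points E \<gamma>) \<le> card (crossing_points E \<gamma>')"
    and u: "u \<in> crossing_points E \<gamma>" "blacks E \<gamma> u = {x1, x3}" "x1 \<noteq> x3"
    and g: "arc g" "pathstart g = pos x1" "pathfinish g = pos x3"
      "edge_int g \<inter> drawing_points X Y E pos \<gamma> = {}"
    and jD: "jc D" and DDP: "D \<inter> drawing_points X Y E pos \<gamma> \<subseteq> {pos x1, pos x3}"
    and K: "(K = inside D \<and> K' = outside D) \<or> (K = outside D \<and> K' = inside D)"
    and uK: "u \<in> K" and x2: "x2 \<in> X" "pos x2 \<in> K'"
    and nosep: "\<not> ((\<exists>x\<in>X. pos x \<in> inside D) \<and> (\<exists>x\<in>X. pos x \<in> outside D))"
  shows False
proof -
  obtain e1 e3 where e: "e1 \<in> E" "e3 \<in> E" "fst e1 = x1" "fst e3 = x3"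
    "u \<in> edge_int (\<gamma> e1)" "u \<in> edge_int (\<gamma> e3)"
    using cross_struct[OF op u] by blast
  have x13: "x1 \<in> X" "x3 \<in> X" using e EXY by auto
  define y where "y = snd e1"
  have y: "y \<in> Y" using e EXY unfolding y_def by auto
  have a1: "arc (\<gamma> e1)" using drawing_facts(2)[OF op e(1)] .
  define t1 where "t1 = (SOME t. 0 \<le> t \<and> t \<le> 1 \<and> \<gamma> e1 t = u)"
  have h1: "0 < t1" "t1 < 1" "\<gamma> e1 t1 = u"
    using half[OF a1 e(5)] unfolding t1_def by auto
  have inj1: "inj_on (\<gamma> e1) {0..1}" using a1 by (simp add: arc_def)
  define Q where "Q = \<gamma> e1 ` {t1..1}"
  have Qc: "connected Q" unfolding Q_def
  proof (rule connected_continuous_image)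
    have "continuous_on {0..1} (\<gamma> e1)" using arc_imp_path[OF a1] unfolding path_def .  
    then show "continuous_on {t1..1} (\<gamma> e1)" by (rule continuous_on_subset) (use h1 in auto)
  qed simp
  have QDP: "Q \<subseteq> drawing_points X Y E pos \<gamma>"
    using drawing_points_edge[OF e(1), of \<gamma> X Y pos] h1 unfolding Q_def path_image_def by auto
  have QD: "Q \<inter> D = {}"
  proof (rule ccontr)
    assume "Q \<inter> D \<noteq> {}"
    then obtain p where p: "p \<in> Q" "p \<in> D" by blast
    then have "p = pos x1 \<or> p = pos x3" using QDP DDP by blast
    moreover obtain a where a: "a \<in> {t1..1}" "p = \<gamma> e1 a" using p Q_def by auto
    moreover have "p \<in> path_image (\<gamma> e1)" using a h1 unfolding path_image_def by auto
    ultimately consider "p = pos x1" | "p = pos x3" "pos x3 \<in> path_image (\<gamma> e1)" by blast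
    then show False
    proof cases
      case 1
      then have "\<gamma> e1 a = \<gamma> e1 0" using a drawing_facts(3)[OF op e(1)] e(3) by (simp add: pathstart_def)
      then show False using inj1 a h1 by (auto dest: inj_onD[of _ _ a 0])
    next
      case 2
      then show False using black_on_edge[OF op EXY XY e(1) x13(2)] e(3) u(3) by auto
    qed
  qed
  have uQ: "u \<in> Q" unfolding Q_def using h1 by auto
  have dD: "inside D \<inter> outside D = {}" by (rule jc_disj[OF jD])
  have QK: "Q \<subseteq> K" using conn_place[OF jD Qc QD] K uK uQ dD by blast
  have yQ: "pos y \<in> Q"
  proof -
    have "\<gamma> e1 1 \<in> Q" unfolding Q_def using h1 by auto
    then show ?thesis unfolding y_def using drawing_facts(4)[OF op e(1)] by (simp add: pathfinish_def)
  qed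
  have hy: "\<forall>f\<in>E. snd f = y \<longrightarrow> fst f = x1 \<or> fst f = x3"
  proof (intro ballI impI, rule ccontr)
    fix f assume f: "f \<in> E" "snd f = y" and nf: "\<not> (fst f = x1 \<or> fst f = x3)"
    have af: "arc (\<gamma> f)" using drawing_facts(2)[OF op f(1)] .
    have fc: "connected (path_image (\<gamma> f))" using af by (simp add: arc_imp_path connected_path_image)
    have fD: "path_image (\<gamma> f) \<inter> D = {}"
    proof (rule ccontr)
      assume "path_image (\<gamma> f) \<inter> D \<noteq> {}"
      then obtain p where p: "p \<in> path_image (\<gamma> f)" "p \<in> D" by blast
      then have "p = pos x1 \<or> p = pos x3" using drawing_points_edge[OF f(1), of \<gamma> X Y pos] DDP by blast
      then show False using black_on_edge[OF op EXY XY f(1) x13(1)] black_on_edge[OF op EXY XY f(1) x13(2)] p nf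
        by auto
    qed
    have "pos y \<in> path_image (\<gamma> f)" using drawing_facts(4)[OF op f(1)] f(2)
      by (metis pathfinish_in_path_image)
    then have fK: "path_image (\<gamma> f) \<subseteq> K" using conn_place[OF jD fc fD] K yQ QK dD by blast
    have "pos (fst f) \<in> path_image (\<gamma> f)" using drawing_facts(3)[OF op f(1)]
      by (metis pathstart_in_path_image)
    then have "pos (fst f) \<in> K" using fK by blast
    moreover have "fst f \<in> X" using f EXY by auto
    ultimately show False using nosep K x2 by blast
  qed
  have "e3 \<noteq> e1" using e u(3) by auto
  obtain pos' \<gamma>' where "one_planar_drawing X Y E pos' \<gamma>'"
    "card (crossing_points E \<gamma>') < card (crossing_points E \<gamma>)"
    using redraw[OF op finE EXY XY y hy u(3) x13 g e(1) y_def[symmetric] e(2) \<open>e3 \<noteq> e1\<close> e(5) e(6)]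
    by blast
  then show False using min by (meson not_le)
qed




lemma pi_split: "path_image g = edge_int g \<union> {pathstart g, pathfinish g}"
  unfolding edge_int_def by (auto simp: pathstart_in_path_image pathfinish_in_path_image)

lemma cp_not_vertex:
  assumes "one_planar_drawing X Y E pos \<gamma>" "u \<in> crossing_points E \<gamma>" "v \<in> X \<union> Y"
  shows "u \<noteq> pos v"
proof
  assume uv: "u = pos v"
  obtain e where e: "e \<in> E" "u \<in> edge_int (\<gamma> e)" using assms(2) unfolding crossing_points_def by blast
  then have "pos v \<in> path_image (\<gamma> e)" using uv edge_int_sub by blast
  then have "v = fst e \<or> v = snd e" using drawing_facts(5)[OF assms(1) e(1) assms(3)] by blast
  then have "u = pathstart (\<gamma> e) \<or> u = pathfinish (\<gamma> e)"
    using drawing_facts(3,4)[OF assms(1) e(1)] uv by auto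
  then show False using e(2) unfolding edge_int_def by blast
qed

lemma aux_facts:
  assumes "aux_edges X Y E pos \<gamma> \<eta>" "u \<in> crossing_points E \<gamma>"
  shows "arc (\<eta> u)" "{pathstart (\<eta> u), pathfinish (\<eta> u)} = pos ` blacks E \<gamma> u"
    "edge_int (\<eta> u) \<inter> drawing_points X Y E pos \<gamma> = {}"
    "\<And>u'. u' \<in> crossing_points E \<gamma> \<Longrightarrow> u' \<noteq> u \<Longrightarrow> edge_int (\<eta> u) \<inter> edge_int (\<eta> u') = {}"
    "\<And>u'. u' \<in> crossing_points E \<gamma> \<Longrightarrow> u' \<noteq> u \<Longrightarrow>
        inside (path_image (\<eta> u) \<union> two_path E \<gamma> u) \<inter> path_image (\<eta> u') = {}"
  using assms unfolding aux_edges_def by blast+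

theorem proposition4:
  fixes X Y :: "'v set" and E :: "('v \<times> 'v) set"
    and pos :: "'v \<Rightarrow> complex" and \<gamma> :: "'v \<times> 'v \<Rightarrow> real \<Rightarrow> complex"
    and \<eta> :: "complex \<Rightarrow> real \<Rightarrow> complex"
    and w1 w2 w w' :: complex and x1 x2 x3 :: 'v
  assumes "finite X" "finite Y" "X \<inter> Y = {}" "E \<subseteq> X \<times> Y"
    and "3 \<le> card X" "card X \<le> card Y"
    and "min_crossing_one_planar_drawing X Y E pos \<gamma>"
    and "aux_edges X Y E pos \<gamma> \<eta>"
    and "no_separating_2cycle X E pos \<gamma> \<eta>"
    and "w1 \<in> crossing_points E \<gamma>" "w2 \<in> crossing_points E \<gamma>"
    and "w \<in> crossing_points E \<gamma>" "w' \<in> crossing_points E \<gamma>"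
    and "x1 \<noteq> x2" "x2 \<noteq> x3" "x1 \<noteq> x3"
    and "blacks E \<gamma> w1 = {x1, x2}" "blacks E \<gamma> w2 = {x2, x3}" "blacks E \<gamma> w = {x1, x3}"
    and "w' \<noteq> w" "blacks E \<gamma> w' = {x1, x3}"
  shows "let C = path_image (\<eta> w1) \<union> path_image (\<eta> w2) \<union> path_image (\<eta> w);
             P = two_path E \<gamma> w - {pos x1, pos x3};
             P' = two_path E \<gamma> w' - {pos x1, pos x3}
         in (P \<subseteq> inside C \<and> P' \<subseteq> outside C) \<or> (P' \<subseteq> inside C \<and> P \<subseteq> outside C)"
proof -
  note fX = assms(1) and fY = assms(2) and XY = assms(3) and EXY = assms(4)
  note minD = assms(7) and aux = assms(8) and nosep0 = assms(9)
  note cw1 = assms(10) and cw2 = assms(11) and cw = assms(12) and cw' = assms(13)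
  note x12 = assms(14) and x23 = assms(15) and x13 = assms(16)
  note bw1 = assms(17) and bw2 = assms(18) and bw = assms(19) and ww' = assms(20) and bw' = assms(21)
  have op: "one_planar_drawing X Y E pos \<gamma>"
    using minD unfolding min_crossing_one_planar_drawing_def by (rule conjunct1)
  have minf: "\<forall>pos' \<gamma>'. one_planar_drawing X Y E pos' \<gamma>' \<longrightarrow>
                 card (crossing_points E \<gamma>) \<le> card (crossing_points E \<gamma>')"
    using minD unfolding min_crossing_one_planar_drawing_def by (rule conjunct2)
  have finE: "finite E" using EXY fX fY by (meson finite_SigmaI finite_subset)
  have xX: "x1 \<in> X" "x2 \<in> X" "x3 \<in> X" using blacks_X[OF EXY, of \<gamma>] bw1 bw2 by auto
  define DP where "DP = drawing_points X Y E pos \<gamma>"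
  define p1 where "p1 = pos x1"
  define p2 where "p2 = pos x2"
  define p3 where "p3 = pos x3"
  have inj: "inj_on pos (X \<union> Y)" by (rule drawing_facts(1)[OF op])
  have pd: "p1 \<noteq> p2" "p2 \<noteq> p3" "p1 \<noteq> p3" unfolding p1_def p2_def p3_def
    using inj xX x12 x23 x13 by (auto dest: inj_onD)
  have pDP: "p1 \<in> DP" "p2 \<in> DP" "p3 \<in> DP" unfolding p1_def p2_def p3_def DP_def
    using xX by (auto intro: drawing_points_vertex)
  have dws: "w \<noteq> w1" "w \<noteq> w2" "w' \<noteq> w1" "w' \<noteq> w2" "w1 \<noteq> w2"
    using bw bw' bw1 bw2 x12 x23 x13 by (metis doubleton_eq_iff)+
  obtain c where c: "arc c" "pathstart c = p1" "pathfinish c = p3" "path_image c = path_image (\<eta> w)"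
    "edge_int c = edge_int (\<eta> w)"
    using orient[OF aux_facts(1)[OF aux cw], of p1 p3] aux_facts(2)[OF aux cw] bw pd
    unfolding p1_def p3_def by auto
  obtain c' where c': "arc c'" "pathstart c' = p1" "pathfinish c' = p3" "path_image c' = path_image (\<eta> w')"
    "edge_int c' = edge_int (\<eta> w')"
    using orient[OF aux_facts(1)[OF aux cw'], of p1 p3] aux_facts(2)[OF aux cw'] bw' pd
    unfolding p1_def p3_def by auto
  obtain a1 where a1: "arc a1" "pathstart a1 = p1" "pathfinish a1 = p2" "path_image a1 = path_image (\<eta> w1)"
    "edge_int a1 = edge_int (\<eta> w1)"
    using orient[OF aux_facts(1)[OF aux cw1], of p1 p2] aux_facts(2)[OF aux cw1] bw1 pd
    unfolding p1_def p2_def by auto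
  obtain a2 where a2: "arc a2" "pathstart a2 = p2" "pathfinish a2 = p3" "path_image a2 = path_image (\<eta> w2)"
    "edge_int a2 = edge_int (\<eta> w2)"
    using orient[OF aux_facts(1)[OF aux cw2], of p2 p3] aux_facts(2)[OF aux cw2] bw2 pd
    unfolding p2_def p3_def by auto
  have EDP: "edge_int c \<inter> DP = {}" "edge_int c' \<inter> DP = {}" "edge_int a1 \<inter> DP = {}" "edge_int a2 \<inter> DP = {}"
    using aux_facts(3)[OF aux cw] aux_facts(3)[OF aux cw'] aux_facts(3)[OF aux cw1] aux_facts(3)[OF aux cw2]
      c c' a1 a2 unfolding DP_def by auto
  have EE: "edge_int c \<inter> edge_int c' = {}" "edge_int c \<inter> edge_int a1 = {}" "edge_int c \<inter> edge_int a2 = {}"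
    "edge_int c' \<inter> edge_int a1 = {}" "edge_int c' \<inter> edge_int a2 = {}" "edge_int a1 \<inter> edge_int a2 = {}"
    using aux_facts(4)[OF aux cw cw'] aux_facts(4)[OF aux cw cw1] aux_facts(4)[OF aux cw cw2]
      aux_facts(4)[OF aux cw' cw1] aux_facts(4)[OF aux cw' cw2] aux_facts(4)[OF aux cw1 cw2]
      c c' a1 a2 dws ww' by auto
  have PIc: "path_image c = edge_int c \<union> {p1, p3}" "path_image c' = edge_int c' \<union> {p1, p3}"
    "path_image a1 = edge_int a1 \<union> {p1, p2}" "path_image a2 = edge_int a2 \<union> {p2, p3}"
    using pi_split[of c] pi_split[of c'] pi_split[of a1] pi_split[of a2] c c' a1 a2 by auto
  define A where "A = a1 +++ a2"
  have a12: "path_image a1 \<inter> path_image a2 \<subseteq> {pathstart a2}"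
    using PIc(3,4) EE(6) EDP(3,4) pDP pd a2 by auto
  have Aarc: "arc A" unfolding A_def by (rule arc_join[OF a1(1) a2(1)]) (use a1 a2 a12 in auto)
  have Aends: "pathstart A = p1" "pathfinish A = p3" unfolding A_def using a1 a2 by auto
  have PIA: "path_image A = path_image a1 \<union> path_image a2" unfolding A_def using a1 a2
    by (simp add: path_image_join)
  have icc': "path_image c \<inter> path_image c' = {p1, p3}"
    using PIc(1,2) EE(1) EDP(1,2) pDP by auto
  have icA: "path_image c \<inter> path_image A = {p1, p3}"
    unfolding PIA using PIc EE(2,3) EDP pDP pd by auto
  have ic'A: "path_image c' \<inter> path_image A = {p1, p3}"
    unfolding PIA using PIc EE(4,5) EDP pDP pd by auto
  have qA: "p2 \<in> path_image A" "p2 \<notin> {p1, p3}" using PIA PIc(3) pd by auto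
  obtain pb where pb: "arc pb" "pathstart pb = p1" "pathfinish pb = p3"
    "path_image pb = two_path E \<gamma> w" "two_path E \<gamma> w \<subseteq> DP"
    "\<And>v. v \<in> X \<union> Y \<Longrightarrow> pos v \<in> two_path E \<gamma> w \<Longrightarrow> v = x1 \<or> v = x3"
    "w \<in> two_path E \<gamma> w"
    using two_path_arc[OF op EXY XY cw bw x13] unfolding p1_def p3_def DP_def by blast
  obtain pb' where pb': "arc pb'" "pathstart pb' = p1" "pathfinish pb' = p3"
    "path_image pb' = two_path E \<gamma> w'" "two_path E \<gamma> w' \<subseteq> DP"
    "\<And>v. v \<in> X \<union> Y \<Longrightarrow> pos v \<in> two_path E \<gamma> w' \<Longrightarrow> v = x1 \<or> v = x3"
    "w' \<in> two_path E \<gamma> w'"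
    using two_path_arc[OF op EXY XY cw' bw' x13] unfolding p1_def p3_def DP_def by blast
  define Tb where "Tb = two_path E \<gamma> w"
  define Tb' where "Tb' = two_path E \<gamma> w'"
  define P where "P = Tb - {p1, p3}"
  define P' where "P' = Tb' - {p1, p3}"
  have p2T: "p2 \<notin> Tb" "p2 \<notin> Tb'" unfolding Tb_def Tb'_def p2_def
    using pb(6)[of x2] pb'(6)[of x2] xX x12 x23 by auto
  have jT: "jc (path_image c \<union> Tb)" unfolding Tb_def pb(4)[symmetric]
    by (rule jc_arcs) (use c pb PIc(1) EDP(1) in auto)
  have jT': "jc (path_image c' \<union> Tb')" unfolding Tb'_def pb'(4)[symmetric]
    by (rule jc_arcs) (use c' pb' PIc(2) EDP(2) in auto)
  have Pc: "connected P" unfolding P_def Tb_def pb(4)[symmetric]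
    using connected_simple_path_endless[OF arc_imp_simple_path[OF pb(1)]] pb(2,3) by simp
  have Pc': "connected P'" unfolding P'_def Tb'_def pb'(4)[symmetric]
    using connected_simple_path_endless[OF arc_imp_simple_path[OF pb'(1)]] pb'(2,3) by simp
  have wP: "w \<in> P" unfolding P_def Tb_def p1_def p3_def
    using pb(7) cp_not_vertex[OF op cw, of x1] cp_not_vertex[OF op cw, of x3] xX by auto
  have wP': "w' \<in> P'" unfolding P'_def Tb'_def p1_def p3_def
    using pb'(7) cp_not_vertex[OF op cw', of x1] cp_not_vertex[OF op cw', of x3] xX by auto
  have Pd: "P \<inter> (path_image c \<union> path_image c' \<union> path_image A) = {}"
    unfolding P_def PIA using PIc EDP pb(5) p2T unfolding Tb_def by auto
  have Pd': "P' \<inter> (path_image c \<union> path_image c' \<union> path_image A) = {}"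
    unfolding P'_def PIA using PIc EDP pb'(5) p2T unfolding Tb'_def by auto
  have iT: "inside (path_image c \<union> Tb) \<inter> (path_image c' \<union> path_image A) = {}"
    unfolding PIA Tb_def c(4) c'(4) a1(4) a2(4)
    using aux_facts(5)[OF aux cw cw'] aux_facts(5)[OF aux cw cw1] aux_facts(5)[OF aux cw cw2] dws ww'
    by auto
  have iT': "inside (path_image c' \<union> Tb') \<inter> (path_image c \<union> path_image A) = {}"
    unfolding PIA Tb'_def c(4) c'(4) a1(4) a2(4)
    using aux_facts(5)[OF aux cw' cw] aux_facts(5)[OF aux cw' cw1] aux_facts(5)[OF aux cw' cw2] dws ww'
    by auto
  have jC: "jc (path_image c \<union> path_image A)"
    by (rule jc_arcs) (use c Aarc Aends icA in auto)
  have Ceq: "path_image (\<eta> w1) \<union> path_image (\<eta> w2) \<union> path_image (\<eta> w) = path_image c \<union> path_image A"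
    unfolding PIA using c a1 a2 by auto
  have PeqS: "two_path E \<gamma> w - {pos x1, pos x3} = P" "two_path E \<gamma> w' - {pos x1, pos x3} = P'"
    unfolding P_def P'_def Tb_def Tb'_def p1_def p3_def by auto
  show ?thesis unfolding Let_def Ceq PeqS
  proof (rule ccontr)
    let ?C = "path_image c \<union> path_image A"
    assume ng: "\<not> ((P \<subseteq> inside ?C \<and> P' \<subseteq> outside ?C) \<or> (P' \<subseteq> inside ?C \<and> P \<subseteq> outside ?C))"
    have PinC: "P \<subseteq> inside ?C \<or> P \<subseteq> outside ?C" by (rule conn_place[OF jC Pc]) (use Pd in auto)
    have P'inC: "P' \<subseteq> inside ?C \<or> P' \<subseteq> outside ?C" by (rule conn_place[OF jC Pc']) (use Pd' in auto)
    have same: "(P \<subseteq> inside ?C \<and> P' \<subseteq> inside ?C) \<or> (P \<subseteq> outside ?C \<and> P' \<subseteq> outside ?C)"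
      using PinC P'inC ng by blast
    have R: "(p2 \<in> outside (path_image c \<union> path_image c') \<and>
            (P \<subseteq> inside (path_image c \<union> path_image c') \<or> P' \<subseteq> inside (path_image c \<union> path_image c'))) \<or>
         (p2 \<in> inside (path_image c \<union> path_image c') \<and>
            (P \<subseteq> outside (path_image c \<union> path_image c') \<or> P' \<subseteq> outside (path_image c \<union> path_image c')))"
      by (rule main_topo[OF c(1) c'(1) Aarc c(2,3) c'(2,3) Aends icc' icA ic'A qA jT _ Pc _ Pd iT
            jT' _ Pc' _ Pd' iT' same]) (use wP wP' in \<open>auto simp: P_def P'_def\<close>)
    define D where "D = path_image c \<union> path_image c'"
    have jD: "jc D" unfolding D_def by (rule jc_arcs) (use c c' icc' in auto)
    have DDP: "D \<inter> DP \<subseteq> {p1, p3}" unfolding D_def using PIc EDP by auto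
    have Deq: "D = path_image (\<eta> w) \<union> path_image (\<eta> w')" unfolding D_def using c c' by simp
    have nosep: "\<not> ((\<exists>x\<in>X. pos x \<in> inside D) \<and> (\<exists>x\<in>X. pos x \<in> outside D))"
      using nosep0 cw cw' ww' bw bw' unfolding no_separating_2cycle_def Deq by metis
    have fin: False if u: "u \<in> crossing_points E \<gamma>" "blacks E \<gamma> u = {x1, x3}"
      and K: "(K = inside D \<and> K' = outside D) \<or> (K = outside D \<and> K' = inside D)"
      and uK: "u \<in> K" and x2K: "pos x2 \<in> K'" for u K K'
      by (rule finish[OF op finE EXY XY minf u x13 c(1) c(2,3)[unfolded p1_def p3_def] _ jD _ K uK xX(2) x2K nosep])
         (use EDP(1) DDP in \<open>auto simp: DP_def p1_def p3_def\<close>)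
    show False
      using R[folded D_def]
    proof (elim disjE conjE)
      assume "p2 \<in> outside D" "P \<subseteq> inside D"
      then show False using fin[OF cw bw, of "inside D" "outside D"] wP p2_def by blast
    next
      assume "p2 \<in> outside D" "P' \<subseteq> inside D"
      then show False using fin[OF cw' bw', of "inside D" "outside D"] wP' p2_def by blast
    next
      assume "p2 \<in> inside D" "P \<subseteq> outside D"
      then show False using fin[OF cw bw, of "outside D" "inside D"] wP p2_def by blast
    next
      assume "p2 \<in> inside D" "P' \<subseteq> outside D"
      then show False using fin[OF cw' bw', of "outside D" "inside D"] wP' p2_def by blast
    qed
  qed
qed


end
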